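(* Let $n_{\mathrm w},m\in\mathbb{N}$, let $\gamma:\mathbb{R}^{n_{\mathrm w}}\to\mathbb{R}$ be a convex piecewise quadratic function, and let $\bar A\in\mathbb{R}^{m}$, $\bar B\in\mathbb{R}^{m\times n_{\mathrm w}}$, $\bar C\in\mathbb{R}^{m}$. Let $N\ge 1$ and $Z_0<Z_1<\dots<Z_N$ be real numbers, and let $\varphi:\mathbb{R}\to\mathbb{R}$ be a convex piecewise quadratic function on $[Z_0,Z_N]$ of the form $$\varphi(z)=\tfrac12 h_r z^2+f_r z+g_r\quad \text{if } z\in[Z_{r-1},Z_r],\ r\in\{1,\dots,N\},$$ with $h_r,f_r,g_r\in\mathbb{R}$ such that for every $r\in\{1,\dots,N-1\}$: $h_r>0$ or $[f_r\ g_r]\neq[f_{r+1}\ g_{r+1}]$. Consider the optimization problem $$\min_{w,y_1,\dots,y_N}\ \gamma(w)+\varphi(Z_0)+\sum_{r=1}^N\big[\varphi(y_r)-\varphi(Z_{r-1})\big]$$ subject to $Z_{r-1}\le y_r\le Z_r$ for $r=1,\dots,N$, and $\bar A\big[Z_0+\sum_{r=1}^N (y_r-Z_{r-1})\big]+\bar B w\le \bar C$. Let $w^*,y_1^*,\dots,y_N^*$ be an optimizer of this problem. Then: (i) for every $r\in\{2,\dots,N\}$, if $y_r^*>Z_{r-1}$ then $y_s^*=Z_s$ for all $s=1,\dots,r-1$; (ii) for every $r\in\{1,\dots,N-1\}$, if $y_r^*=Z_{r-1}$ then $y_s^*=Z_{s-1}$ for all $s=r+1,\dots,N$; (iii) with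 $z^*:=Z_0+\sum_{r=1}^N (y_r^*-Z_{r-1})$, the pair $(w^*,z^* )$ is an optimizer of the problem $$\min_{w,z}\ \gamma(w)+\varphi(z)\quad\text{s.t.}\quad Z_0\le z\le Z_N,\quad \bar A z+\bar B w\le \bar C.$$ *)

theory Defs
  imports "HOL-Analysis.Analysis"
begin

definition piecewise_quadratic :: "(real^'n \<Rightarrow> real) \<Rightarrow> bool" where
  "piecewise_quadratic \<gamma> \<longleftrightarrow>
     (\<exists>P. finite P \<and> (\<forall>S\<in>P. polyhedron S) \<and> \<Union>P = UNIV \<and>
        (\<forall>S\<in>P. \<exists>(Q::real^'n^'n) (q::real^'n) (c::real).
            \<forall>x\<in>S. \<gamma> x = (1/2) * (x \<bullet> (Q *v x)) + q \<bullet> x + c))"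

definition convex_piecewise_quadratic :: "(real^'n \<Rightarrow> real) \<Rightarrow> bool" where
  "convex_piecewise_quadratic \<gamma> \<longleftrightarrow> convex_on UNIV \<gamma> \<and> piecewise_quadratic \<gamma>"

definition vec_le :: "real^'m \<Rightarrow> real^'m \<Rightarrow> bool" where
  "vec_le u v \<longleftrightarrow> (\<forall>i. u $ i \<le> v $ i)"

definition lifted_feasible ::
  "nat \<Rightarrow> (nat \<Rightarrow> real) \<Rightarrow> real^'m \<Rightarrow> real^'n^'m \<Rightarrow> real^'m \<Rightarrow> real^'n \<Rightarrow> (nat \<Rightarrow> real) \<Rightarrow> bool" where
  "lifted_feasible N Z A B C w y \<longleftrightarrow>
     (\<forall>r\<in>{1..N}. Z (r - 1) \<le> y r \<and> y r \<le> Z r) \<and>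
     vec_le ((Z 0 + (\<Sum>r=1..N. y r - Z (r - 1))) *\<^sub>R A + B *v w) C"

definition lifted_obj ::
  "(real^'n \<Rightarrow> real) \<Rightarrow> (real \<Rightarrow> real) \<Rightarrow> nat \<Rightarrow> (nat \<Rightarrow> real) \<Rightarrow> real^'n \<Rightarrow> (nat \<Rightarrow> real) \<Rightarrow> real" where
  "lifted_obj \<gamma> \<phi> N Z w y = \<gamma> w + \<phi> (Z 0) + (\<Sum>r=1..N. \<phi> (y r) - \<phi> (Z (r - 1)))"

definition orig_feasible ::
  "nat \<Rightarrow> (nat \<Rightarrow> real) \<Rightarrow> real^'m \<Rightarrow> real^'n^'m \<Rightarrow> real^'m \<Rightarrow> real^'n \<Rightarrow> real \<Rightarrow> bool" where
  "orig_feasible N Z A B C w z \<longleftrightarrow>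
     Z 0 \<le> z \<and> z \<le> Z N \<and> vec_le (z *\<^sub>R A + B *v w) C"

end

theory Submission
  imports Defs
begin

lemma tele: "(\<Sum>s=1..(n::nat). F s - F (s-1)) = F n - (F 0 :: real)"
  by (induction n) (auto simp: sum.cl_ivl_Suc)

lemma Zle: fixes N i j :: nat assumes "\<And>r. r \<in> {1..N} \<Longrightarrow> Z (r - 1) < (Z r :: real)"
  shows "i \<le> j \<Longrightarrow> j \<le> N \<Longrightarrow> Z i \<le> Z j"
proof (induction j)
  case 0 then show ?case by simp
next
  case (Suc j)
  show ?case
  proof (cases "i = Suc j")
    case False
    then have "Z i \<le> Z j" using Suc by auto
    moreover have "Z j < Z (Suc j)" using assms[of "Suc j"] Suc by auto
    ultimately show ?thesis by simp
  qed simp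
qed

lemma filled_sum:
  fixes G :: "real \<Rightarrow> real" and k N :: nat
  assumes k: "k \<in> {1..N}" and lo: "\<forall>s\<in>{1..N}. s < k \<longrightarrow> y s = Z s"
    and hi: "\<forall>s\<in>{1..N}. k < s \<longrightarrow> y s = Z (s - 1)"
  shows "(\<Sum>s=1..N. G (y s) - G (Z (s-1))) = G (y k) - G (Z 0)"
proof -
  have e1: "{1..N} = {1..k} \<union> {Suc k..N}" using k by auto
  have "(\<Sum>s=1..N. G (y s) - G (Z (s-1))) = (\<Sum>s=1..k. G (y s) - G (Z (s-1))) + (\<Sum>s=Suc k..N. G (y s) - G (Z (s-1)))"
    unfolding e1 by (rule sum.union_disjoint) auto
  also have "(\<Sum>s=Suc k..N. G (y s) - G (Z (s-1))) = 0"
    using hi k by (intro sum.neutral) auto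
  also have "{1..k} = insert k {1..k-1}" using k by auto
  also have "(\<Sum>s\<in>insert k {1..k-1}. G (y s) - G (Z (s-1))) = (G (y k) - G (Z (k-1))) + (\<Sum>s=1..k-1. G (y s) - G (Z (s-1)))"
    by (subst sum.insert) auto
  also have "(\<Sum>s=1..k-1. G (y s) - G (Z (s-1))) = (\<Sum>s=1..k-1. G (Z s) - G (Z (s-1)))"
    using lo k by (intro sum.cong) auto
  also have "\<dots> = G (Z (k-1)) - G (Z 0)" by (rule tele)
  finally show ?thesis by simp
qed

lemma sum_shift:
  fixes G :: "real \<Rightarrow> real"
  assumes "finite A" "s \<in> A" "r \<in> A" "s \<noteq> r"
  shows "(\<Sum>t\<in>A. G ((y(s := y s + e, r := y r - e)) t) - K t) =
         (\<Sum>t\<in>A. G (y t) - K t) + (G (y s + e) - G (y s)) + (G (y r - e) - G (y r))"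
proof -
  let ?H' = "\<lambda>t. G ((y(s := y s + e, r := y r - e)) t) - K t"
  let ?H = "\<lambda>t. G (y t) - K t"
  have "(\<Sum>t\<in>A. ?H' t) = (\<Sum>t\<in>A. ?H t) + (\<Sum>t\<in>A. ?H' t - ?H t)"
    by (simp add: sum_subtractf)
  also have "(\<Sum>t\<in>A. ?H' t - ?H t) = (\<Sum>t\<in>{s,r}. ?H' t - ?H t)"
    using assms by (intro sum.mono_neutral_right) auto
  finally show ?thesis using assms by (auto simp: ac_simps fun_upd_def)
qed

lemma diff_mono:
  fixes \<phi> :: "real \<Rightarrow> real"
  assumes c: "convex_on {lo..hi} \<phi>" and "lo \<le> u" "v + d \<le> hi" "0 < d" "u + d \<le> v"
  shows "\<phi> (u + d) - \<phi> u \<le> \<phi> (v + d) - \<phi> v"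
proof (cases "u + d = v")
  case True
  have a: "(\<phi> u - \<phi> (u+d)) / (u - (u+d)) \<le> (\<phi> u - \<phi> (v+d)) / (u - (v+d))"
       and b: "(\<phi> u - \<phi> (v+d)) / (u - (v+d)) \<le> (\<phi> (u+d) - \<phi> (v+d)) / ((u+d) - (v+d))"
    using convex_on_slope_le[OF c, of u "v+d" "u+d"] assms by auto
  have "(\<phi> u - \<phi> (u+d)) / (u - (u+d)) \<le> (\<phi> (u+d) - \<phi> (v+d)) / ((u+d) - (v+d))"
    using a b by (rule order_trans)
  moreover have "u - (u+d) = -d" "(u+d) - (v+d) = -d" using True by auto
  ultimately have "(\<phi> u - \<phi> (u+d)) / (- d) \<le> (\<phi> (u+d) - \<phi> (v+d)) / (- d)" by simp
  then have "\<phi> (u+d) - \<phi> (v+d) \<le> \<phi> u - \<phi> (u+d)" using \<open>0<d\<close> by (simp add: divide_le_cancel)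
  then show ?thesis using True by simp
next
  case False
  have s1: "(\<phi> u - \<phi> (u+d)) / (u - (u+d)) \<le> (\<phi> (u+d) - \<phi> v) / ((u+d) - v)"
    using convex_on_slope_le[OF c, of u v "u+d"] assms False by force
  have s2: "(\<phi> (u+d) - \<phi> v) / ((u+d) - v) \<le> (\<phi> v - \<phi> (v+d)) / (v - (v+d))"
    using convex_on_slope_le[OF c, of "u+d" "v+d" v] assms False by force
  from s1 s2 have "(\<phi> u - \<phi> (u+d)) / (- d) \<le> (\<phi> v - \<phi> (v+d)) / (- d)" by simp
  then have "\<phi> v - \<phi> (v+d) \<le> \<phi> u - \<phi> (u+d)" using \<open>0<d\<close> by (simp add: divide_le_cancel)
  then show ?thesis by simp
qed

lemma mid_conv:
  fixes \<phi> :: "real \<Rightarrow> real"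
  assumes c: "convex_on {lo..hi} \<phi>" and "x \<in> {lo..hi}" "y \<in> {lo..hi}"
  shows "2 * \<phi> ((x+y)/2) \<le> \<phi> x + \<phi> y"
proof -
  have "\<phi> ((1 - 1/2) *\<^sub>R x + (1/2) *\<^sub>R y) \<le> (1 - 1/2) * \<phi> x + (1/2) * \<phi> y"
    using convex_onD[OF c, of "1/2" x y] assms by simp
  moreover have "(1 - 1/2) *\<^sub>R x + (1/2::real) *\<^sub>R y = (x+y)/2" by simp
  ultimately show ?thesis by (simp add: add_divide_distrib)
qed

lemma h_nonneg:
  fixes \<phi> :: "real \<Rightarrow> real"
  assumes c: "convex_on {lo..hi} \<phi>" "lo \<le> L" "M \<le> hi" "L < M"
    and p: "\<And>z. z\<in>{L..M} \<Longrightarrow> \<phi> z = 1/2*h*z^2 + f*z + g"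
  shows "h \<ge> 0"
proof -
  have "L \<in> {lo..hi}" "M \<in> {lo..hi}" using assms by auto
  then have "2 * \<phi> ((L+M)/2) \<le> \<phi> L + \<phi> M" by (rule mid_conv[OF c(1)])
  moreover have "\<phi> ((L+M)/2) = 1/2*h*((L+M)/2)^2 + f*((L+M)/2) + g" using p assms by auto
  moreover have "\<phi> L = 1/2*h*L^2 + f*L + g" "\<phi> M = 1/2*h*M^2 + f*M + g" using p assms by auto
  moreover have "\<phi> L + \<phi> M - 2 * \<phi> ((L+M)/2) = h * (M-L)^2 / 4"
    using calculation(2,3,4) by (simp add: power2_eq_square field_simps)
  ultimately have "0 \<le> h * (M-L)^2" by linarith
  moreover have "(M-L)^2 > 0" using assms by simp
  ultimately show ?thesis by (simp add: zero_le_mult_iff)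
qed

lemma local_strict:
  fixes \<phi> :: "real \<Rightarrow> real"
  assumes c: "convex_on {lo..hi} \<phi>" and "lo \<le> L" "R \<le> hi" "L < M" "M < R"
    and p1: "\<And>z. z\<in>{L..M} \<Longrightarrow> \<phi> z = 1/2*h1*z^2 + f1*z + g1"
    and p2: "\<And>z. z\<in>{M..R} \<Longrightarrow> \<phi> z = 1/2*h2*z^2 + f2*z + g2"
    and nd: "h1 > 0 \<or> (f1, g1) \<noteq> (f2, g2)"
    and d: "0 < d" "d \<le> M - L" "d \<le> R - M"
  shows "\<phi> M - \<phi> (M - d) < \<phi> (M + d) - \<phi> M"
proof (rule ccontr)
  assume E1: "\<not> ?thesis"
  have h1: "h1 \<ge> 0" by (rule h_nonneg[OF c _ _ _ p1]) (use assms in auto)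
  have h2: "h2 \<ge> 0" by (rule h_nonneg[OF c _ _ _ p2]) (use assms in auto)
  have cont: "1/2*h1*M^2 + f1*M + g1 = 1/2*h2*M^2 + f2*M + g2" using p1[of M] p2[of M] assms by auto
  have m: "2 * \<phi> (((M - d/2) + (M + d/2))/2) \<le> \<phi> (M - d/2) + \<phi> (M + d/2)"
    by (rule mid_conv[OF c]) (use assms in auto)
  have v1: "\<phi> (M - d/2) = 1/2*h1*(M - d/2)^2 + f1*(M - d/2) + g1" using p1 assms by auto
  have v2: "\<phi> (M + d/2) = 1/2*h2*(M + d/2)^2 + f2*(M + d/2) + g2" using p2 assms by auto
  have v3: "\<phi> (M - d) = 1/2*h1*(M - d)^2 + f1*(M - d) + g1" using p1 assms by auto
  have v4: "\<phi> (M + d) = 1/2*h2*(M + d)^2 + f2*(M + d) + g2" using p2 assms by auto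
  have v0: "\<phi> M = 1/2*h1*M^2 + f1*M + g1" using p1 assms by auto
  have v0': "\<phi> M = 1/2*h2*M^2 + f2*M + g2" using v0 cont by simp
  define P1 where "P1 = h1*M + f1"
  define P2 where "P2 = h2*M + f2"
  have i1: "\<phi> M - \<phi> (M-d) = d*P1 - (d*d*h1)/2" unfolding P1_def using v0 v3 by (simp add: power2_eq_square algebra_simps)
  have i2: "\<phi> (M+d) - \<phi> M = d*P2 + (d*d*h2)/2" unfolding P2_def using v0' v4 by (simp add: power2_eq_square algebra_simps)
  have i3: "\<phi> M - \<phi> (M-d/2) = (d*P1)/2 - (d*d*h1)/8" unfolding P1_def using v0 v1 by (simp add: power2_eq_square algebra_simps)
  have i4: "\<phi> (M+d/2) - \<phi> M = (d*P2)/2 + (d*d*h2)/8" unfolding P2_def using v0' v2 by (simp add: power2_eq_square algebra_simps)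
  have mm: "2 * \<phi> M \<le> \<phi> (M - d/2) + \<phi> (M + d/2)" using m by simp
  have "d*d*h1 + d*d*h2 \<le> 0" using E1 i1 i2 i3 i4 mm by linarith
  moreover have "d*d*h1 \<ge> 0" "d*d*h2 \<ge> 0" using h1 h2 d by auto
  ultimately have "d*d*h1 = 0" "d*d*h2 = 0" by linarith+
  then have "h1 = 0" "h2 = 0" using d by auto
  have "d*P1 = d*P2" using E1 i1 i2 i3 i4 mm \<open>d*d*h1 = 0\<close> \<open>d*d*h2 = 0\<close> by linarith
  then have "P1 = P2" using d by simp
  then have "f1 = f2" using \<open>h1 = 0\<close> \<open>h2 = 0\<close> unfolding P1_def P2_def by simp
  then have "g1 = g2" using cont \<open>h1 = 0\<close> \<open>h2 = 0\<close> by simp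
  then show False using nd \<open>h1 = 0\<close> \<open>f1 = f2\<close> by simp
qed

lemma pick:
  fixes N :: nat and P :: "nat \<Rightarrow> bool"
  assumes "N \<ge> 1"
  shows "\<exists>k\<in>{1..N}. (k = 1 \<or> P k) \<and> (\<forall>s\<in>{1..N}. k < s \<longrightarrow> \<not> P s)"
  using assms
proof (induction N)
  case 0 then show ?case by simp
next
  case (Suc n)
  show ?case
  proof (cases "P (Suc n)")
    case True then show ?thesis by (intro bexI[of _ "Suc n"]) auto
  next
    case False
    show ?thesis
    proof (cases "n = 0")
      case True then show ?thesis by (intro bexI[of _ 1]) auto
    next
      case nz: False
      have "\<exists>k\<in>{1..n}. (k = 1 \<or> P k) \<and> (\<forall>s\<in>{1..n}. k < s \<longrightarrow> \<not> P s)"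
        using Suc.IH nz by simp
      then obtain k where k: "k\<in>{1..n}" "k = 1 \<or> P k" "\<forall>s\<in>{1..n}. k < s \<longrightarrow> \<not> P s"
        by blast
      show ?thesis
      proof (intro bexI[of _ k] conjI ballI impI)
        fix s assume "s \<in> {1..Suc n}" "k < s"
        then show "\<not> P s" using k False by (cases "s = Suc n") auto
      qed (use k in auto)
    qed
  qed
qed

theorem theorem2:
  fixes \<gamma> :: "real^'n \<Rightarrow> real" and \<phi> :: "real \<Rightarrow> real"
    and A :: "real^'m" and B :: "real^'n^'m" and C :: "real^'m"
    and N :: nat and Z h f g :: "nat \<Rightarrow> real"
    and wopt :: "real^'n" and yopt :: "nat \<Rightarrow> real"
  assumes gamma: "convex_piecewise_quadratic \<gamma>"
    and N: "N \<ge> 1"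
    and Zmono: "\<And>r. r \<in> {1..N} \<Longrightarrow> Z (r - 1) < Z r"
    and phi_conv: "convex_on {Z 0..Z N} \<phi>"
    and phi_form: "\<And>r z. r \<in> {1..N} \<Longrightarrow> z \<in> {Z (r - 1)..Z r} \<Longrightarrow>
                     \<phi> z = (1/2) * h r * z^2 + f r * z + g r"
    and nondeg: "\<And>r. r \<in> {1..N-1} \<Longrightarrow> h r > 0 \<or> (f r, g r) \<noteq> (f (r+1), g (r+1))"
    and opt_feas: "lifted_feasible N Z A B C wopt yopt"
    and opt_min: "\<And>w y. lifted_feasible N Z A B C w y \<Longrightarrow>
                    lifted_obj \<gamma> \<phi> N Z wopt yopt \<le> lifted_obj \<gamma> \<phi> N Z w y"
  shows "(\<forall>r\<in>{2..N}. yopt r > Z (r - 1) \<longrightarrow> (\<forall>s\<in>{1..r-1}. yopt s = Z s))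
       \<and> (\<forall>r\<in>{1..N-1}. yopt r = Z (r - 1) \<longrightarrow> (\<forall>s\<in>{r+1..N}. yopt s = Z (s - 1)))
       \<and> (let zopt = Z 0 + (\<Sum>r=1..N. yopt r - Z (r - 1)) in
            orig_feasible N Z A B C wopt zopt \<and>
            (\<forall>w z. orig_feasible N Z A B C w z \<longrightarrow> \<gamma> wopt + \<phi> zopt \<le> \<gamma> w + \<phi> z))"
proof -
  have Zle': "\<And>i j. i \<le> j \<Longrightarrow> j \<le> N \<Longrightarrow> Z i \<le> Z j" using Zle[where N=N and Z=Z, OF Zmono] by blast
  have feas: "\<And>r. r\<in>{1..N} \<Longrightarrow> Z (r-1) \<le> yopt r \<and> yopt r \<le> Z r"
    and vle: "vec_le ((Z 0 + (\<Sum>r=1..N. yopt r - Z (r - 1))) *\<^sub>R A + B *v wopt) C"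
    using opt_feas unfolding lifted_feasible_def by auto
  have Z0N: "Z 0 \<le> Z N" using Zle'[of 0 N] by simp
  have P1: "\<forall>r\<in>{2..N}. yopt r > Z (r - 1) \<longrightarrow> (\<forall>s\<in>{1..r-1}. yopt s = Z s)"
  proof (intro ballI impI)
    fix r s assume r: "r\<in>{2..N}" and yr: "yopt r > Z (r-1)" and s: "s\<in>{1..r-1}"
    show "yopt s = Z s"
    proof (rule ccontr)
      assume ne: "yopt s \<noteq> Z s"
      define a where "a = yopt s"
      define b where "b = yopt r"
      have sr: "s \<noteq> r" "s\<in>{1..N}" "r\<in>{1..N}" using r s by auto
      have as: "Z (s-1) \<le> a" "a < Z s" using feas[of s] ne sr unfolding a_def by auto
      have br: "b \<le> Z r" "Z (r-1) < b" using feas[of r] yr sr unfolding b_def by auto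
      have Zs1: "Z s < Z (s+1)" using Zmono[of "s+1"] r s by auto
      have Zsr: "Z s \<le> Z (r-1)" using Zle'[of s "r-1"] r s by auto
      have Z0s: "Z 0 \<le> Z (s-1)" using Zle'[of 0 "s-1"] r s by auto
      have ZrN: "Z r \<le> Z N" using Zle'[of r N] r by auto
      have Zs1r: "Z (s+1) \<le> Z r" using Zle'[of "s+1" r] r s by auto
      define e where "e = min (min (Z s - a) (b - Z (r-1))) (Z (s+1) - Z s) / 2"
      have e: "0 < e" "e \<le> (Z s - a)/2" "e \<le> (b - Z (r-1))/2" "e \<le> (Z (s+1) - Z s)/2"
        unfolding e_def using as br Zs1 by auto
      define y' where "y' = yopt(s := a + e, r := b - e)"
      have sum_id: "(\<Sum>t=1..N. y' t - Z (t-1)) = (\<Sum>t=1..N. yopt t - Z (t-1))"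
        using sum_shift[of "{1..N}" s r "\<lambda>x. x" yopt e "\<lambda>t. Z (t-1)"] sr
        unfolding y'_def a_def b_def by simp
      have sum_phi: "(\<Sum>t=1..N. \<phi> (y' t) - \<phi> (Z (t-1))) =
          (\<Sum>t=1..N. \<phi> (yopt t) - \<phi> (Z (t-1))) + (\<phi> (a+e) - \<phi> a) + (\<phi> (b-e) - \<phi> b)"
        using sum_shift[of "{1..N}" s r \<phi> yopt e "\<lambda>t. \<phi> (Z (t-1))"] sr
        unfolding y'_def a_def b_def by simp
      have feas': "lifted_feasible N Z A B C wopt y'"
        unfolding lifted_feasible_def sum_id
      proof (rule conjI[OF _ vle], rule ballI)
        fix t assume t: "t \<in> {1..N}"
        show "Z (t - 1) \<le> y' t \<and> y' t \<le> Z t"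
        proof (cases "t = r")
          case True then show ?thesis unfolding y'_def using e br by auto
        next
          case False
          then show ?thesis
          proof (cases "t = s")
            case True then show ?thesis unfolding y'_def using e as \<open>t \<noteq> r\<close> by auto
          qed (use feas[OF t] \<open>t \<noteq> r\<close> in \<open>auto simp: y'_def\<close>)
        qed
      qed
      have c1: "\<phi> (a+e) - \<phi> a \<le> \<phi> (Z s - e + e) - \<phi> (Z s - e)"
        by (rule diff_mono[OF phi_conv]) (use e as Z0s Zs1 Zs1r ZrN in auto)
      have c2: "\<phi> (Z s) - \<phi> (Z s - e) < \<phi> (Z s + e) - \<phi> (Z s)"
      proof (rule local_strict[OF phi_conv, of "Z (s-1)" "Z (s+1)" "Z s" "h s" "f s" "g s" "h (s+1)" "f (s+1)" "g (s+1)"])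
        show "\<And>z. z \<in> {Z (s-1)..Z s} \<Longrightarrow> \<phi> z = 1/2 * h s * z^2 + f s * z + g s"
          using phi_form[of s] sr by auto
        show "\<And>z. z \<in> {Z s..Z (s+1)} \<Longrightarrow> \<phi> z = 1/2 * h (s+1) * z^2 + f (s+1) * z + g (s+1)"
          using phi_form[of "s+1"] r s by auto
        show "0 < h s \<or> (f s, g s) \<noteq> (f (s + 1), g (s + 1))"
          using nondeg[of s] r s by fastforce
      qed (use e as Z0s Zs1 Zs1r ZrN in auto)
      have c3: "\<phi> (Z s + e) - \<phi> (Z s) \<le> \<phi> (b - e + e) - \<phi> (b - e)"
        by (rule diff_mono[OF phi_conv]) (use e br Zsr Z0s as ZrN in auto)
      have neg: "(\<phi> (a+e) - \<phi> a) + (\<phi> (b-e) - \<phi> b) < 0" using c1 c2 c3 by simp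
      have "lifted_obj \<gamma> \<phi> N Z wopt yopt \<le> lifted_obj \<gamma> \<phi> N Z wopt y'" by (rule opt_min[OF feas'])
      then show False using neg unfolding lifted_obj_def sum_phi by simp
    qed
  qed
  have P2: "\<forall>r\<in>{1..N-1}. yopt r = Z (r - 1) \<longrightarrow> (\<forall>s\<in>{r+1..N}. yopt s = Z (s - 1))"
  proof (intro ballI impI)
    fix r s assume r: "r\<in>{1..N-1}" and yr: "yopt r = Z (r - 1)" and s: "s\<in>{r+1..N}"
    show "yopt s = Z (s - 1)"
    proof (rule ccontr)
      assume "yopt s \<noteq> Z (s - 1)"
      then have "yopt s > Z (s - 1)" using feas[of s] r s by force
      then have "yopt r = Z r" using P1 r s by auto
      moreover have "r \<in> {1..N}" using r by auto
      ultimately show False using yr Zmono[of r] by auto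
    qed
  qed
  obtain k where k: "k\<in>{1..N}" "k = 1 \<or> Z (k-1) < yopt k" "\<forall>s\<in>{1..N}. k < s \<longrightarrow> \<not> Z (s-1) < yopt s"
    using pick[OF N, of "\<lambda>k. Z (k-1) < yopt k"] by blast
  have klo: "\<forall>s\<in>{1..N}. s < k \<longrightarrow> yopt s = Z s"
  proof (intro ballI impI)
    fix s assume s: "s \<in> {1..N}" "s < k"
    then have "k \<in> {2..N}" "Z (k-1) < yopt k" using k by auto
    then show "yopt s = Z s" using P1 s by auto
  qed
  have khi: "\<forall>s\<in>{1..N}. k < s \<longrightarrow> yopt s = Z (s-1)"
  proof (intro ballI impI)
    fix s assume "s \<in> {1..N}" "k < s"
    then show "yopt s = Z (s-1)" using k(3) feas[of s] by force
  qed
  have zk: "Z 0 + (\<Sum>r=1..N. yopt r - Z (r - 1)) = yopt k"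
    using filled_sum[OF k(1) klo khi, of "\<lambda>x. x"] by simp
  have objk: "lifted_obj \<gamma> \<phi> N Z wopt yopt = \<gamma> wopt + \<phi> (yopt k)"
    using filled_sum[OF k(1) klo khi, of \<phi>] unfolding lifted_obj_def by simp
  have P3: "orig_feasible N Z A B C wopt (yopt k) \<and>
      (\<forall>w z. orig_feasible N Z A B C w z \<longrightarrow> \<gamma> wopt + \<phi> (yopt k) \<le> \<gamma> w + \<phi> z)"
  proof (intro conjI allI impI)
    show "orig_feasible N Z A B C wopt (yopt k)"
      unfolding orig_feasible_def using vle zk feas[OF k(1)] Zle'[of 0 "k-1"] Zle'[of k N] k(1) by force
  next
    fix w z assume of: "orig_feasible N Z A B C w z"
    then have z: "Z 0 \<le> z" "z \<le> Z N" and vz: "vec_le (z *\<^sub>R A + B *v w) C"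
      unfolding orig_feasible_def by auto
    obtain j where j: "j\<in>{1..N}" "j = 1 \<or> Z (j-1) < z" "\<forall>s\<in>{1..N}. j < s \<longrightarrow> \<not> Z (s-1) < z"
      using pick[OF N, of "\<lambda>j. Z (j-1) < z"] by blast
    define y where "y r = max (Z (r-1)) (min z (Z r))" for r
    have zj1: "Z (j-1) \<le> z" using j z by auto
    have zj2: "z \<le> Z j"
    proof (cases "j = N")
      case True then show ?thesis using z by simp
    next
      case False then have "\<not> Z (Suc j - 1) < z" using j(1) j(3)[rule_format, of "Suc j"] by auto
      then show ?thesis by simp
    qed
    have yj: "y j = z" unfolding y_def using zj1 zj2 by auto
    have ylo: "\<forall>s\<in>{1..N}. s < j \<longrightarrow> y s = Z s"
    proof (intro ballI impI)
      fix s assume s: "s \<in> {1..N}" "s < j"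
      then have "Z (j-1) < z" using j by auto
      moreover have "Z s \<le> Z (j-1)" using Zle'[of s "j-1"] s j by auto
      moreover have "Z (s-1) < Z s" using Zmono s by auto
      ultimately show "y s = Z s" unfolding y_def by auto
    qed
    have yhi: "\<forall>s\<in>{1..N}. j < s \<longrightarrow> y s = Z (s-1)"
    proof (intro ballI impI)
      fix s assume s: "s \<in> {1..N}" "j < s"
      then have "z \<le> Z (s-1)" using j by auto
      moreover have "Z (s-1) < Z s" using Zmono s by auto
      ultimately show "y s = Z (s-1)" unfolding y_def by auto
    qed
    have zs: "Z 0 + (\<Sum>r=1..N. y r - Z (r - 1)) = z"
      using filled_sum[OF j(1) ylo yhi, of "\<lambda>x. x"] yj by simp
    have objz: "lifted_obj \<gamma> \<phi> N Z w y = \<gamma> w + \<phi> z"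
      using filled_sum[OF j(1) ylo yhi, of \<phi>] yj unfolding lifted_obj_def by simp
    have "lifted_feasible N Z A B C w y"
      unfolding lifted_feasible_def zs using vz Zmono by (auto simp: y_def less_imp_le)
    from opt_min[OF this] show "\<gamma> wopt + \<phi> (yopt k) \<le> \<gamma> w + \<phi> z" using objk objz by simp
  qed
  show ?thesis using P1 P2 P3 zk by (simp add: Let_def)
qed

end
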